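(* Let $\mathbf{k}$ be a commutative ring, $n\ge0$, $\mathcal{A}=\mathbf{k}[S_n]$. If $\beta,\gamma\in\operatorname{Comp}_n$ and $\widetilde{\beta}\preceq_\pi\widetilde{\gamma}$, then $\mathcal{R}_\beta\subseteq\mathcal{R}_\gamma$.
   Context: $S_n$ is the symmetric group on $[n]=\{1,\dots,n\}$, with product $(uw)(i)=u(w(i))$. For $w\in S_n$, $\operatorname{Des}(w)=\{i\in[n-1]: w(i)>w(i+1)\}$. For $I\subseteq[n-1]$, $\mathbf{B}_I=\sum_{w\in S_n,\ \operatorname{Des}(w)\subseteq I} w\in\mathcal{A}$. A composition $\alpha=(\alpha_1,\dots,\alpha_p)$ of $n$ is a finite sequence of positive integers with sum $n$; $\operatorname{Comp}_n$ is the set of these. $\operatorname{Set}(\alpha)=\{\alpha_1,\alpha_1+\alpha_2,\dots,\alpha_1+\cdots+\alpha_{p-1}\}$, and $\mathbf{B}_\alpha:=\mathbf{B}_{\operatorname{Set}(\alpha)}$. The underlying partition $\widetilde\alpha$ is obtained by sorting the parts of $\alpha$ in weakly decreasing order. A composition $\alpha=(\alpha_1,\dots,\alpha_m)$ refines $\beta=(\beta_1,\dots,\beta_p)$ if $\alpha$ can be split into $p$ contiguous subsequences whose $j$-th one sums to $\beta_j$. For partitions $\lambda,\mu$ of $n$, $\lambda\preceq_\pi\mu$ means some rearrangement of the parts of $\lambda$ (as a composition) refines $\mu$; equivalently, writing $\lambda=(\lambda_1,\dots,\lambda_k)$, $\mu=(\mu_1,\dots,\mu_l)$, there is a map $f:[k]\to[l]$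 with $\mu_j=\sum_{i\in f^{-1}(j)}\lambda_i$ for all $j$. For $\beta\in\operatorname{Comp}_n$, $\mathcal{R}_\beta:=\mathbf{B}_\beta\mathcal{A}$. *)

theory Defs
  imports "HOL-Combinatorics.Permutations"
begin

type_synonym perm = "nat \<Rightarrow> nat"

definition Sn :: "nat \<Rightarrow> perm set" where
  "Sn n = {w. w permutes {1..n}}"

definition grp_alg :: "nat \<Rightarrow> (perm \<Rightarrow> 'k::comm_ring_1) set" where
  "grp_alg n = {a. \<forall>w. w \<notin> Sn n \<longrightarrow> a w = 0}"

text \<open>Product in k[S_n], with (uw)(i) = u(w(i)), i.e. uw = u o w.\<close>
definition alg_mult :: "nat \<Rightarrow> (perm \<Rightarrow> 'k::comm_ring_1) \<Rightarrow> (perm \<Rightarrow> 'k) \<Rightarrow> (perm \<Rightarrow> 'k)" where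
  "alg_mult n a b = (\<lambda>w. \<Sum>(u,v)\<in>{(u,v). u \<in> Sn n \<and> v \<in> Sn n \<and> u \<circ> v = w}. a u * b v)"

definition Des :: "nat \<Rightarrow> perm \<Rightarrow> nat set" where
  "Des n w = {i. 1 \<le> i \<and> i \<le> n - 1 \<and> w i > w (Suc i)}"

definition BI :: "nat \<Rightarrow> nat set \<Rightarrow> perm \<Rightarrow> 'k::comm_ring_1" where
  "BI n I = (\<lambda>w. if w \<in> Sn n \<and> Des n w \<subseteq> I then 1 else 0)"

definition is_comp :: "nat \<Rightarrow> nat list \<Rightarrow> bool" where
  "is_comp n \<alpha> \<longleftrightarrow> (\<forall>x\<in>set \<alpha>. 0 < x) \<and> sum_list \<alpha> = n"

definition comp_Set :: "nat list \<Rightarrow> nat set" where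
  "comp_Set \<alpha> = {sum_list (take i \<alpha>) | i. 1 \<le> i \<and> i < length \<alpha>}"

definition B_comp :: "nat \<Rightarrow> nat list \<Rightarrow> perm \<Rightarrow> 'k::comm_ring_1" where
  "B_comp n \<alpha> = BI n (comp_Set \<alpha>)"

definition und_part :: "nat list \<Rightarrow> nat list" where
  "und_part \<alpha> = rev (sort \<alpha>)"

definition part_le :: "nat list \<Rightarrow> nat list \<Rightarrow> bool" where
  "part_le lam mu \<longleftrightarrow> (\<exists>f. (\<forall>i<length lam. f i < length mu) \<and>
      (\<forall>j<length mu. mu ! j = (\<Sum>i\<in>{i. i < length lam \<and> f i = j}. lam ! i)))"

definition R_comp :: "nat \<Rightarrow> nat list \<Rightarrow> (perm \<Rightarrow> 'k::comm_ring_1) set" where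
  "R_comp n \<beta> = {alg_mult n (B_comp n \<beta>) a | a. a \<in> grp_alg n}"

end

theory Submission
  imports Defs
begin

lemma Sn_fin: "finite (Sn n)"
  unfolding Sn_def by (rule finite_permutations) simp

lemma Sn_comp: "u \<in> Sn n \<Longrightarrow> v \<in> Sn n \<Longrightarrow> u \<circ> v \<in> Sn n"
  unfolding Sn_def by (auto intro: permutes_compose)

lemma Sn_inv: "u \<in> Sn n \<Longrightarrow> inv u \<in> Sn n"
  unfolding Sn_def by (auto intro: permutes_inv)

lemma Sn_inv_comp: "u \<in> Sn n \<Longrightarrow> inv u \<circ> u = id" "u \<in> Sn n \<Longrightarrow> u \<circ> inv u = id"
  unfolding Sn_def by (auto intro: permutes_inv_o)

lemma alg_mult_conv:
  assumes w: "w \<in> Sn n"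
  shows "alg_mult n a b w = (\<Sum>u\<in>Sn n. a u * b (inv u \<circ> w))"
proof -
  have eq: "{(u,v). u \<in> Sn n \<and> v \<in> Sn n \<and> u \<circ> v = w} = (\<lambda>u. (u, inv u \<circ> w)) ` Sn n"
  proof (intro equalityI subsetI)
    fix p assume "p \<in> {(u,v). u \<in> Sn n \<and> v \<in> Sn n \<and> u \<circ> v = w}"
    then obtain u v where p: "p = (u,v)" and u: "u \<in> Sn n" and uv: "w = u \<circ> v" by auto
    then have "inv u \<circ> w = v" using Sn_inv_comp(1)[OF u] by (metis comp_assoc id_comp)
    then show "p \<in> (\<lambda>u. (u, inv u \<circ> w)) ` Sn n" using u p by auto
  next
    fix p assume "p \<in> (\<lambda>u. (u, inv u \<circ> w)) ` Sn n"
    then obtain u where p: "p = (u, inv u \<circ> w)" and u: "u \<in> Sn n" by auto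
    have "inv u \<circ> w \<in> Sn n" by (rule Sn_comp[OF Sn_inv[OF u] w])
    moreover have "u \<circ> (inv u \<circ> w) = w" using Sn_inv_comp(2)[OF u] by (simp add: o_assoc)
    ultimately show "p \<in> {(u,v). u \<in> Sn n \<and> v \<in> Sn n \<and> u \<circ> v = w}" using u p by auto
  qed
  show ?thesis unfolding alg_mult_def eq
    by (subst sum.reindex) (auto intro: inj_onI)
qed

lemma alg_mult_out:
  assumes w: "w \<notin> Sn n"
  shows "alg_mult n a b w = 0"
proof -
  have e: "{(u,v). u \<in> Sn n \<and> v \<in> Sn n \<and> u \<circ> v = w} = {}" using w Sn_comp by blast
  show ?thesis unfolding alg_mult_def e by simp
qed

lemma alg_mult_grp: "alg_mult n a b \<in> grp_alg n"
  unfolding grp_alg_def using alg_mult_out by blast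

lemma alg_mult_assoc:
  "alg_mult n (alg_mult n a b) c = alg_mult n a (alg_mult n b c)"
proof
  fix w
  show "alg_mult n (alg_mult n a b) c w = alg_mult n a (alg_mult n b c) w"
  proof (cases "w \<in> Sn n")
    case False then show ?thesis by (simp add: alg_mult_out)
  next
    case w: True
    have inner: "(\<Sum>t\<in>Sn n. b (inv x \<circ> t) * c (inv t \<circ> w)) = alg_mult n b c (inv x \<circ> w)"
      if x: "x \<in> Sn n" for x
    proof -
      have xw: "inv x \<circ> w \<in> Sn n" using Sn_comp Sn_inv x w by blast
      have "Sn n = (\<lambda>y. x \<circ> y) ` Sn n"
      proof (rule set_eqI, rule iffI)
        fix t assume t: "t \<in> Sn n"
        have "t = x \<circ> (inv x \<circ> t)" using Sn_inv_comp(2)[OF x] by (simp add: o_assoc)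
        moreover have "inv x \<circ> t \<in> Sn n" using Sn_comp Sn_inv x t by blast
        ultimately show "t \<in> (\<lambda>y. x \<circ> y) ` Sn n" by blast
      qed (use Sn_comp x in blast)
      moreover have "inj_on (\<lambda>y. x \<circ> y) (Sn n)"
      proof (rule inj_onI)
        fix y z assume "x \<circ> y = x \<circ> z"
        then have "inv x \<circ> (x \<circ> y) = inv x \<circ> (x \<circ> z)" by simp
        then have "inv x \<circ> x \<circ> y = inv x \<circ> x \<circ> z" by (simp add: o_assoc)
        then show "y = z" using Sn_inv_comp(1)[OF x] by simp
      qed
      ultimately have "(\<Sum>t\<in>Sn n. b (inv x \<circ> t) * c (inv t \<circ> w))
          = (\<Sum>y\<in>Sn n. b (inv x \<circ> (x \<circ> y)) * c (inv (x \<circ> y) \<circ> w))"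
        by (metis (no_types, lifting) sum.reindex_cong)
      also have "\<dots> = (\<Sum>y\<in>Sn n. b y * c (inv y \<circ> (inv x \<circ> w)))"
      proof (rule sum.cong[OF refl])
        fix y assume y: "y \<in> Sn n"
        have "inv x \<circ> (x \<circ> y) = y" using Sn_inv_comp(1)[OF x] by (simp add: o_assoc)
        moreover have "inv (x \<circ> y) = inv y \<circ> inv x"
          using x y unfolding Sn_def by (simp add: o_inv_distrib permutes_bij bij_is_inj bij_is_surj)
        ultimately show "b (inv x \<circ> (x \<circ> y)) * c (inv (x \<circ> y) \<circ> w) = b y * c (inv y \<circ> (inv x \<circ> w))"
          by (simp add: o_assoc)
      qed
      also have "\<dots> = alg_mult n b c (inv x \<circ> w)" by (rule alg_mult_conv[OF xw, symmetric])
      finally show ?thesis .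
    qed
    have "alg_mult n (alg_mult n a b) c w = (\<Sum>t\<in>Sn n. (\<Sum>x\<in>Sn n. a x * b (inv x \<circ> t)) * c (inv t \<circ> w))"
      using w by (simp add: alg_mult_conv)
    also have "\<dots> = (\<Sum>t\<in>Sn n. \<Sum>x\<in>Sn n. a x * (b (inv x \<circ> t) * c (inv t \<circ> w)))"
      by (simp add: sum_distrib_right mult.assoc)
    also have "\<dots> = (\<Sum>x\<in>Sn n. a x * (\<Sum>t\<in>Sn n. b (inv x \<circ> t) * c (inv t \<circ> w)))"
      by (subst sum.swap) (simp add: sum_distrib_left)
    also have "\<dots> = (\<Sum>x\<in>Sn n. a x * alg_mult n b c (inv x \<circ> w))"
      using inner by simp
    also have "\<dots> = alg_mult n a (alg_mult n b c) w" using w by (simp add: alg_mult_conv)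
    finally show ?thesis .
  qed
qed

definition incr :: "nat \<Rightarrow> (nat \<Rightarrow> nat) \<Rightarrow> perm \<Rightarrow> bool" where
  "incr n g w \<longleftrightarrow> (\<forall>i j. 1 \<le> i \<longrightarrow> i < j \<longrightarrow> j \<le> n \<longrightarrow> g i = g j \<longrightarrow> w i < w j)"

definition stab :: "nat \<Rightarrow> (nat \<Rightarrow> nat) \<Rightarrow> perm \<Rightarrow> bool" where
  "stab n g v \<longleftrightarrow> (\<forall>i. 1 \<le> i \<longrightarrow> i \<le> n \<longrightarrow> g (v i) = g i)"

definition invc :: "nat \<Rightarrow> perm \<Rightarrow> nat" where
  "invc n u = card {(a,b). 1 \<le> a \<and> a < b \<and> b \<le> n \<and> u b < u a}"

definition mono_lab :: "nat \<Rightarrow> (nat \<Rightarrow> nat) \<Rightarrow> bool" where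
  "mono_lab n g \<longleftrightarrow> (\<forall>i j. 1 \<le> i \<longrightarrow> i \<le> j \<longrightarrow> j \<le> n \<longrightarrow> g i \<le> g j)"

lemma Sn_in: "w \<in> Sn n \<Longrightarrow> 1 \<le> x \<Longrightarrow> x \<le> n \<Longrightarrow> 1 \<le> w x \<and> w x \<le> n"
  unfolding Sn_def using permutes_in_image[of w "{1..n}" x] by auto

lemma Sn_out: "w \<in> Sn n \<Longrightarrow> \<not> (1 \<le> x \<and> x \<le> n) \<Longrightarrow> w x = x"
  unfolding Sn_def using permutes_not_in[of w "{1..n}" x] by auto

lemma Sn_inj: "w \<in> Sn n \<Longrightarrow> w x = w y \<Longrightarrow> x = y"
  unfolding Sn_def using permutes_inj[of w "{1..n}"] by (auto dest: injD)

lemma Sn_invr: "w \<in> Sn n \<Longrightarrow> w (inv w x) = x"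
  unfolding Sn_def by (simp add: permutes_inverses)

lemma Sn_invl: "w \<in> Sn n \<Longrightarrow> inv w (w x) = x"
  unfolding Sn_def by (simp add: permutes_inverses)

lemma adj_descent:
  fixes u :: perm
  shows "i < j \<Longrightarrow> \<not> u i < u j \<Longrightarrow> \<exists>k. i \<le> k \<and> k < j \<and> \<not> u k < u (Suc k)"
proof (induction j)
  case 0 then show ?case by simp
next
  case (Suc j)
  show ?case
  proof (cases "i < j")
    case True
    show ?thesis
    proof (cases "u i < u j")
      case True
      then have "\<not> u j < u (Suc j)" using Suc.prems by auto
      then show ?thesis using \<open>i < j\<close> by (intro exI[of _ j]) auto
    next
      case False
      then show ?thesis using Suc.IH True by (meson less_SucI)
    qed
  next
    case False
    then have "i = j" using Suc.prems by auto
    then show ?thesis using Suc.prems by auto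
  qed
qed

lemma transpose_lt:
  fixes a b k :: nat
  assumes "a < b" "\<not> (a = k \<and> b = Suc k)"
  shows "transpose k (Suc k) a < transpose k (Suc k) b"
  using assms unfolding transpose_def by auto

lemma invc_swap:
  assumes k: "1 \<le> k" "Suc k \<le> n" and d: "u (Suc k) < u k"
  shows "invc n (u \<circ> transpose k (Suc k)) < invc n u"
proof -
  let ?s = "transpose k (Suc k)"
  define I where "I = {(a,b). 1 \<le> a \<and> a < b \<and> b \<le> n \<and> u b < u a}"
  define I' where "I' = {(a,b). 1 \<le> a \<and> a < b \<and> b \<le> n \<and> (u \<circ> ?s) b < (u \<circ> ?s) a}"
  define \<phi> where "\<phi> = (\<lambda>(a,b). (?s a, ?s b))"
  have finI: "finite I" unfolding I_def
    by (rule finite_subset[of _ "{1..n} \<times> {1..n}"]) auto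
  have inj: "inj_on \<phi> I'" unfolding \<phi>_def
    by (auto intro!: inj_onI dest: transpose_eq_imp_eq)
  have sub: "\<phi> ` I' \<subseteq> I - {(k, Suc k)}"
  proof
    fix p assume "p \<in> \<phi> ` I'"
    then obtain a b where p: "p = (?s a, ?s b)" and ab: "1 \<le> a" "a < b" "b \<le> n" "u (?s b) < u (?s a)"
      unfolding \<phi>_def I'_def by auto
    show "p \<in> I - {(k, Suc k)}"
    proof -
      have ne: "\<not> (a = k \<and> b = Suc k)" using ab d by auto
      have "?s a < ?s b" using ab ne by (intro transpose_lt) auto
      moreover have "1 \<le> ?s a" "?s b \<le> n" using ab k unfolding transpose_def by auto
      moreover have "\<not> (?s a = k \<and> ?s b = Suc k)" using ab by (auto simp: transpose_eq_iff)
      ultimately show ?thesis using ab unfolding p I_def by auto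
    qed
  qed
  have "card I' = card (\<phi> ` I')" using inj by (simp add: card_image)
  also have "\<dots> \<le> card (I - {(k, Suc k)})" using sub finI by (intro card_mono) auto
  also have "\<dots> < card I"
  proof -
    have "(k, Suc k) \<in> I" using k d unfolding I_def by auto
    then show ?thesis using finI by (intro card_Diff1_less)
  qed
  finally show ?thesis unfolding invc_def I_def I'_def .
qed

lemma factor_exists:
  assumes g: "mono_lab n g" and w: "w \<in> Sn n"
  shows "\<exists>u v. u \<in> Sn n \<and> v \<in> Sn n \<and> incr n g u \<and> stab n g v \<and> w = u \<circ> v"
proof -
  define P where "P = (\<lambda>v. v \<in> Sn n \<and> stab n g v)"
  have "P id" unfolding P_def Sn_def stab_def by (simp add: permutes_id)
  from ex_has_least_nat[of P id "\<lambda>v. invc n (w \<circ> v)", OF this]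
  obtain v0 where v0m: "P v0 \<and> (\<forall>y. P y \<longrightarrow> invc n (w \<circ> v0) \<le> invc n (w \<circ> y))"
    by (elim exE) 
  then have v0: "P v0" and min: "\<And>y. P y \<Longrightarrow> invc n (w \<circ> v0) \<le> invc n (w \<circ> y)" by auto
  define u where "u = w \<circ> v0"
  have u: "u \<in> Sn n" unfolding u_def using w v0 Sn_comp P_def by blast
  have incu: "incr n g u"
    unfolding incr_def
  proof (intro allI impI, rule ccontr)
    fix i j assume ij: "1 \<le> i" "i < j" "j \<le> n" "g i = g j" "\<not> u i < u j"
    then obtain k where k: "i \<le> k" "k < j" "\<not> u k < u (Suc k)" using adj_descent by blast
    have "u k \<noteq> u (Suc k)" using Sn_inj[OF u, of k "Suc k"] by auto
    then have d: "u (Suc k) < u k" using k by auto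
    have "g i \<le> g k" "g k \<le> g (Suc k)" "g (Suc k) \<le> g j"
      using g ij k unfolding mono_lab_def by auto
    then have gk: "g k = g (Suc k)" using ij by linarith
    let ?s = "transpose k (Suc k)"
    have s: "?s \<in> Sn n" unfolding Sn_def mem_Collect_eq using ij k by (intro permutes_swap_id) auto
    have "P (v0 \<circ> ?s)"
      unfolding P_def
    proof
      show "v0 \<circ> ?s \<in> Sn n" using Sn_comp s v0 P_def by blast
      show "stab n g (v0 \<circ> ?s)" unfolding stab_def
      proof (intro allI impI)
        fix x assume x: "1 \<le> x" "x \<le> n"
        have "1 \<le> ?s x \<and> ?s x \<le> n" using Sn_in[OF s x] .
        then have "g (v0 (?s x)) = g (?s x)" using v0 unfolding P_def stab_def by blast
        also have "\<dots> = g x" using gk by (auto simp: transpose_def)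
        finally show "g ((v0 \<circ> ?s) x) = g x" by simp
      qed
    qed
    then have "invc n u \<le> invc n (w \<circ> (v0 \<circ> ?s))" using min u_def by blast
    moreover have "invc n (u \<circ> ?s) < invc n u" using invc_swap[of k n u] ij k d by auto
    ultimately show False by (simp add: u_def o_assoc)
  qed
  have v0': "v0 \<in> Sn n" "stab n g v0" using v0 P_def by auto
  have "stab n g (inv v0)" unfolding stab_def
  proof (intro allI impI)
    fix x assume x: "1 \<le> x" "x \<le> n"
    have "1 \<le> inv v0 x \<and> inv v0 x \<le> n" using Sn_in[OF Sn_inv[OF v0'(1)] x] .
    then have "g (v0 (inv v0 x)) = g (inv v0 x)" using v0'(2) unfolding stab_def by blast
    then show "g (inv v0 x) = g x" using Sn_invr[OF v0'(1)] by simp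
  qed
  moreover have "w = u \<circ> inv v0" unfolding u_def using Sn_inv_comp(2)[OF v0'(1)] by (metis comp_assoc comp_id)
  ultimately show ?thesis using u incu Sn_inv[OF v0'(1)] by blast
qed

lemma factor_unique:
  assumes u: "u \<in> Sn n" and u': "u' \<in> Sn n" and iu: "incr n g u" and iu': "incr n g u'"
    and t: "t \<in> Sn n" and st: "stab n g t" and e: "u = u' \<circ> t"
  shows "t = id"
proof (rule ccontr)
  assume "t \<noteq> id"
  then have "\<exists>i. t i \<noteq> i" by auto
  define i where "i = (LEAST i. t i \<noteq> i)"
  have ti: "t i \<noteq> i" unfolding i_def by (metis (mono_tags) LeastI_ex \<open>\<exists>i. t i \<noteq> i\<close>)
  have below: "\<And>j. j < i \<Longrightarrow> t j = j" unfolding i_def using not_less_Least by blast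
  have iin: "1 \<le> i \<and> i \<le> n" using Sn_out[OF t] ti by blast
  have tiin: "1 \<le> t i \<and> t i \<le> n" using Sn_in[OF t] iin by blast
  have "\<not> t i < i" using below Sn_inj[OF t] ti by metis
  then have gt: "i < t i" using ti by auto
  define k where "k = inv t i"
  have tk: "t k = i" unfolding k_def using Sn_invr[OF t] .
  have "k \<noteq> i" using tk ti by auto
  moreover have "\<not> k < i" using below tk \<open>k \<noteq> i\<close> by metis
  ultimately have ki: "i < k" by auto
  have kin: "1 \<le> k \<and> k \<le> n" using Sn_out[OF t, of k] tk \<open>k \<noteq> i\<close> by metis
  have "g (t k) = g k" using st kin unfolding stab_def by blast
  then have gk: "g i = g k" using tk by simp
  have "u i < u k" using iu iin kin ki gk unfolding incr_def by blast
  then have A: "u' (t i) < u' i" using e tk by simp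
  have "g (t i) = g i" using st iin unfolding stab_def by blast
  then have "u' i < u' (t i)" using iu' iin tiin gt unfolding incr_def by metis
  then show False using A by simp
qed

lemma incrD: "incr n g u \<Longrightarrow> 1 \<le> i \<Longrightarrow> i < j \<Longrightarrow> j \<le> n \<Longrightarrow> g i = g j \<Longrightarrow> u i < u j"
  unfolding incr_def by blast

lemma main_abstract:
  fixes n :: nat and g h :: "nat \<Rightarrow> nat" and q :: perm
  assumes g: "mono_lab n g"
    and q: "q \<in> Sn n"
    and qA: "\<And>x y. 1 \<le> x \<Longrightarrow> x \<le> n \<Longrightarrow> 1 \<le> y \<Longrightarrow> y \<le> n \<Longrightarrow> h x = h y \<Longrightarrow> g (q x) = g (q y)"
    and qB: "\<And>x y. 1 \<le> x \<Longrightarrow> x < y \<Longrightarrow> y \<le> n \<Longrightarrow> h x = h y \<Longrightarrow> q x < q y"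
  defines "Z \<equiv> {z \<in> Sn n. incr n h z \<and> (\<forall>x. 1 \<le> x \<longrightarrow> x \<le> n \<longrightarrow> g (z x) = g (q x))}"
  shows "(\<lambda>w. if w \<in> Sn n \<and> incr n h w then 1 else 0) =
     alg_mult n (\<lambda>u. if u \<in> Sn n \<and> incr n g u then 1 else 0) (\<lambda>z. if z \<in> Z then (1::'k::comm_ring_1) else 0)"
proof
  fix w
  show "(if w \<in> Sn n \<and> incr n h w then 1 else 0) =
     alg_mult n (\<lambda>u. if u \<in> Sn n \<and> incr n g u then 1 else 0) (\<lambda>z. if z \<in> Z then (1::'k) else 0) w"
  proof (cases "w \<in> Sn n")
    case False then show ?thesis by (simp add: alg_mult_out)
  next
    case w: True
    define PW where "PW = {(u,v). u \<in> Sn n \<and> v \<in> Sn n \<and> u \<circ> v = w}"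
    define T where "T = {(u,z). u \<in> Sn n \<and> z \<in> Sn n \<and> u \<circ> z = w \<and> incr n g u \<and> z \<in> Z}"
    have finPW: "finite PW" unfolding PW_def
      by (rule finite_subset[of _ "Sn n \<times> Sn n"]) (auto simp: Sn_fin)
    have TPW: "T \<subseteq> PW" unfolding T_def PW_def by auto
    have a: "incr n h w" if pT: "p \<in> T" for p
    proof -
      obtain u z where p: "p = (u,z)" and u: "u \<in> Sn n" and z: "z \<in> Sn n" and uz: "u \<circ> z = w"
        and iu: "incr n g u" and zZ: "z \<in> Z" using pT unfolding T_def by (cases p) auto
      show ?thesis unfolding incr_def
      proof (intro allI impI)
        fix x y assume xy: "1 \<le> x" "x < y" "y \<le> n" "h x = h y"
        have zZ1: "incr n h z" and zZ2: "\<And>x. 1 \<le> x \<Longrightarrow> x \<le> n \<Longrightarrow> g (z x) = g (q x)"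
          using zZ unfolding Z_def by auto
        have zxy: "z x < z y" using incrD[OF zZ1 xy] .
        have "g (z x) = g (q x)" "g (z y) = g (q y)" using zZ2 xy by auto
        moreover have "g (q x) = g (q y)" using qA[of x y] xy by simp
        ultimately have "g (z x) = g (z y)" by simp
        moreover have "1 \<le> z x" "z y \<le> n" using Sn_in[OF z] xy by auto
        ultimately have "u (z x) < u (z y)" using incrD[OF iu, of "z x" "z y"] zxy by blast
        then show "w x < w y" using uz by auto
      qed
    qed
    have b: "p = p'" if pT: "p \<in> T" "p' \<in> T" for p p'
    proof -
      obtain u z where p: "p = (u,z)" and u: "u \<in> Sn n" and z: "z \<in> Sn n" and uz: "u \<circ> z = w"
        and iu: "incr n g u" and zZ: "z \<in> Z" using pT(1) unfolding T_def by (cases p) auto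
      obtain u' z' where p': "p' = (u',z')" and u': "u' \<in> Sn n" and z': "z' \<in> Sn n" and uz': "u' \<circ> z' = w"
        and iu': "incr n g u'" and zZ': "z' \<in> Z" using pT(2) unfolding T_def by (cases p') auto
      define t where "t = z' \<circ> inv z"
      have t: "t \<in> Sn n" unfolding t_def using Sn_comp Sn_inv z z' by blast
      have "u' \<circ> t = u' \<circ> z' \<circ> inv z" unfolding t_def by (simp add: o_assoc)
      also have "\<dots> = u \<circ> z \<circ> inv z" using uz uz' by simp
      also have "\<dots> = u" using Sn_inv_comp(2)[OF z] by (metis comp_assoc comp_id)
      finally have ut: "u = u' \<circ> t" by simp
      have st: "stab n g t" unfolding stab_def
      proof (intro allI impI)
        fix y assume y: "1 \<le> y" "y \<le> n"
        define x where "x = inv z y"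
        have x: "1 \<le> x" "x \<le> n" unfolding x_def using Sn_in[OF Sn_inv[OF z] y] by auto
        have zx: "z x = y" unfolding x_def using Sn_invr[OF z] .
        have "g (t y) = g (z' x)" unfolding t_def x_def by simp
        also have "\<dots> = g (q x)" using zZ' x unfolding Z_def by auto
        also have "\<dots> = g (z x)" using zZ x unfolding Z_def by auto
        finally show "g (t y) = g y" using zx by simp
      qed
      have "t = id" by (rule factor_unique[OF u u' iu iu' t st ut])
      then have "u = u'" using ut by simp
      then have "inv u \<circ> (u \<circ> z) = inv u \<circ> (u \<circ> z')" using uz uz' by simp
      then have "inv u \<circ> u \<circ> z = inv u \<circ> u \<circ> z'" by (simp add: o_assoc)
      then have "z = z'" using Sn_inv_comp(1)[OF u] by simp
      then show ?thesis using p p' \<open>u = u'\<close> by simp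
    qed
    have c: "\<exists>p. p \<in> T" if hw: "incr n h w"
    proof -
      have wq: "w \<circ> inv q \<in> Sn n" using Sn_comp Sn_inv q w by blast
      obtain u v where u: "u \<in> Sn n" and v: "v \<in> Sn n" and iu: "incr n g u" and sv: "stab n g v"
        and e: "w \<circ> inv q = u \<circ> v" using factor_exists[OF g wq] by blast
      define z where "z = v \<circ> q"
      have z: "z \<in> Sn n" unfolding z_def using Sn_comp v q by blast
      have "u \<circ> z = w \<circ> inv q \<circ> q" unfolding z_def using e by (simp add: o_assoc)
      also have "\<dots> = w" using Sn_inv_comp(1)[OF q] by (metis comp_assoc comp_id)
      finally have uz: "u \<circ> z = w" .
      have gz: "g (z x) = g (q x)" if x: "1 \<le> x" "x \<le> n" for x
        using sv Sn_in[OF q x] unfolding stab_def z_def by auto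
      have "incr n h z" unfolding incr_def
      proof (intro allI impI)
        fix x y assume xy: "1 \<le> x" "x < y" "y \<le> n" "h x = h y"
        have "w x < w y" using incrD[OF hw xy] .
        then have wl: "u (z x) < u (z y)" using uz by auto
        have "g (z x) = g (z y)" using gz[of x] gz[of y] qA[of x y] xy by simp
        moreover have zin: "1 \<le> z x" "z x \<le> n" "1 \<le> z y" "z y \<le> n" using Sn_in[OF z] xy by auto
        moreover have "z x \<noteq> z y" using Sn_inj[OF z] xy by auto
        ultimately show "z x < z y" using incrD[OF iu, of "z y" "z x"] wl
          by (metis less_asym' nat_neq_iff)
      qed
      then have "z \<in> Z" unfolding Z_def using z gz by auto
      then have "(u, z) \<in> T" unfolding T_def using u z uz iu by auto
      then show ?thesis by blast
    qed
    have "alg_mult n (\<lambda>u. if u \<in> Sn n \<and> incr n g u then 1 else 0) (\<lambda>z. if z \<in> Z then (1::'k) else 0) w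
        = (\<Sum>p\<in>PW. if p \<in> T then (1::'k) else 0)"
      unfolding alg_mult_def PW_def[symmetric]
    proof (rule sum.cong[OF refl])
      fix p assume "p \<in> PW"
      then show "(case p of (u, v) \<Rightarrow> (if u \<in> Sn n \<and> incr n g u then 1 else 0) * (if v \<in> Z then (1::'k) else 0))
          = (if p \<in> T then 1 else 0)"
        unfolding PW_def T_def by (cases p) (auto split: if_splits)
    qed
    also have "\<dots> = (\<Sum>p\<in>PW \<inter> T. (1::'k))" by (rule sum.inter_restrict[symmetric, OF finPW])
    also have "\<dots> = of_nat (card T)" using TPW by (simp add: Int_absorb1)
    also have "\<dots> = (if incr n h w then 1 else 0)"
    proof (cases "incr n h w")
      case True
      then obtain p where p: "p \<in> T" using c by blast
      then have "T = {p}" using b by blast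
      then show ?thesis using True by simp
    next
      case False
      then have "T = {}" using a by blast
      then show ?thesis using False by simp
    qed
    finally show ?thesis using w by simp
  qed
qed

definition S :: "nat list \<Rightarrow> nat \<Rightarrow> nat" where
  "S \<alpha> k = sum_list (take k \<alpha>)"

definition bl :: "nat list \<Rightarrow> nat \<Rightarrow> nat" where
  "bl \<alpha> x = (LEAST b. x \<le> S \<alpha> (Suc b))"

lemma S_mono: "k \<le> k' \<Longrightarrow> S \<alpha> k \<le> S \<alpha> k'"
proof -
  assume "k \<le> k'"
  then obtain d where "k' = k + d" using le_Suc_ex by blast
  then show ?thesis unfolding S_def by (simp add: take_add)
qed

lemma S_0[simp]: "S \<alpha> 0 = 0" unfolding S_def by simp

lemma S_top: "length \<alpha> \<le> k \<Longrightarrow> S \<alpha> k = sum_list \<alpha>"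
  unfolding S_def by simp

lemma S_Suc: "b < length \<alpha> \<Longrightarrow> S \<alpha> (Suc b) = S \<alpha> b + \<alpha> ! b"
  unfolding S_def by (simp add: take_Suc_conv_app_nth)

lemma bl_props:
  assumes n: "sum_list \<alpha> = n" and x: "1 \<le> x" "x \<le> n"
  shows "bl \<alpha> x < length \<alpha> \<and> S \<alpha> (bl \<alpha> x) < x \<and> x \<le> S \<alpha> (Suc (bl \<alpha> x))"
proof -
  have len: "length \<alpha> \<noteq> 0" using n x by auto
  have ex: "x \<le> S \<alpha> (Suc (length \<alpha> - 1))" using S_top[of \<alpha> "Suc (length \<alpha> - 1)"] n x by auto
  have le: "bl \<alpha> x \<le> length \<alpha> - 1" unfolding bl_def by (rule Least_le) (rule ex)
  have up: "x \<le> S \<alpha> (Suc (bl \<alpha> x))" unfolding bl_def by (rule LeastI) (rule ex)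
  have lo: "S \<alpha> (bl \<alpha> x) < x"
  proof (cases "bl \<alpha> x")
    case 0 then show ?thesis using x by simp
  next
    case (Suc b)
    then have "b < bl \<alpha> x" by simp
    then have "\<not> x \<le> S \<alpha> (Suc b)" unfolding bl_def by (rule not_less_Least)
    then show ?thesis using Suc by simp
  qed
  have "length \<alpha> \<ge> 1" using len by (cases \<alpha>) auto
  then have "bl \<alpha> x < length \<alpha>" using le by arith
  then show ?thesis using up lo by auto
qed

lemma bl_eq:
  assumes "S \<alpha> b < x" "x \<le> S \<alpha> (Suc b)"
  shows "bl \<alpha> x = b"
proof -
  have le: "bl \<alpha> x \<le> b" unfolding bl_def by (rule Least_le) (rule assms(2))
  have up: "x \<le> S \<alpha> (Suc (bl \<alpha> x))" unfolding bl_def by (rule LeastI) (rule assms(2))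
  show ?thesis
  proof (rule ccontr)
    assume "bl \<alpha> x \<noteq> b"
    then have "Suc (bl \<alpha> x) \<le> b" using le by auto
    then have "S \<alpha> (Suc (bl \<alpha> x)) \<le> S \<alpha> b" by (rule S_mono)
    then show False using up assms(1) by simp
  qed
qed

lemma bl_mono:
  assumes n: "sum_list \<alpha> = n" and "x \<le> y" "y \<le> n"
  shows "bl \<alpha> x \<le> bl \<alpha> y"
proof -
  have ex: "y \<le> S \<alpha> (Suc (length \<alpha>))" using S_top[of \<alpha> "Suc (length \<alpha>)"] n assms by auto
  have "y \<le> S \<alpha> (Suc (bl \<alpha> y))" unfolding bl_def by (rule LeastI) (rule ex)
  then have "x \<le> S \<alpha> (Suc (bl \<alpha> y))" using assms by simp
  then show ?thesis unfolding bl_def by (rule Least_le)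
qed

lemma mono_lab_bl: "sum_list \<alpha> = n \<Longrightarrow> mono_lab n (bl \<alpha>)"
  unfolding mono_lab_def using bl_mono by blast

lemma set_iff_bl:
  assumes n: "sum_list \<alpha> = n" and i: "1 \<le> i" "i \<le> n - 1"
  shows "i \<in> comp_Set \<alpha> \<longleftrightarrow> bl \<alpha> i \<noteq> bl \<alpha> (Suc i)"
proof
  assume "i \<in> comp_Set \<alpha>"
  then obtain k where k: "i = S \<alpha> k" "1 \<le> k" "k < length \<alpha>" unfolding comp_Set_def S_def by auto
  have a: "bl \<alpha> i \<le> k - 1" unfolding bl_def by (rule Least_le) (use k in simp)
  have "Suc i \<le> S \<alpha> (Suc (bl \<alpha> (Suc i)))" using bl_props[OF n, of "Suc i"] i by auto
  then have "\<not> bl \<alpha> (Suc i) < k"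
    using S_mono[of "Suc (bl \<alpha> (Suc i))" k \<alpha>] k by auto
  then show "bl \<alpha> i \<noteq> bl \<alpha> (Suc i)" using a k by auto
next
  assume ne: "bl \<alpha> i \<noteq> bl \<alpha> (Suc i)"
  have "bl \<alpha> i \<le> bl \<alpha> (Suc i)" using bl_mono[OF n, of i "Suc i"] i by auto
  then have lt: "Suc (bl \<alpha> i) \<le> bl \<alpha> (Suc i)" using ne by auto
  define k where "k = Suc (bl \<alpha> i)"
  have p1: "i \<le> S \<alpha> k" unfolding k_def using bl_props[OF n, of i] i by auto
  have p2: "S \<alpha> (bl \<alpha> (Suc i)) < Suc i" using bl_props[OF n, of "Suc i"] i by auto
  have "S \<alpha> k \<le> S \<alpha> (bl \<alpha> (Suc i))" unfolding k_def using lt by (rule S_mono)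
  then have ik: "i = S \<alpha> k" using p1 p2 by auto
  have "k < length \<alpha>"
  proof (rule ccontr)
    assume "\<not> k < length \<alpha>"
    then have "S \<alpha> k = n" using S_top n by auto
    then show False using ik i by auto
  qed
  then show "i \<in> comp_Set \<alpha>" unfolding comp_Set_def S_def k_def using ik unfolding S_def k_def by auto
qed

lemma Des_iff_incr:
  assumes n: "sum_list \<alpha> = n" and w: "w \<in> Sn n"
  shows "Des n w \<subseteq> comp_Set \<alpha> \<longleftrightarrow> incr n (bl \<alpha>) w"
proof
  assume D: "Des n w \<subseteq> comp_Set \<alpha>"
  show "incr n (bl \<alpha>) w" unfolding incr_def
  proof (intro allI impI, rule ccontr)
    fix i j assume ij: "1 \<le> i" "i < j" "j \<le> n" "bl \<alpha> i = bl \<alpha> j" "\<not> w i < w j"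
    then obtain k where k: "i \<le> k" "k < j" "\<not> w k < w (Suc k)" using adj_descent by blast
    have "w k \<noteq> w (Suc k)" using Sn_inj[OF w, of k "Suc k"] by auto
    then have "k \<in> Des n w" unfolding Des_def using k ij by auto
    then have "k \<in> comp_Set \<alpha>" using D by auto
    then have "bl \<alpha> k \<noteq> bl \<alpha> (Suc k)" using set_iff_bl[OF n, of k] k ij by auto
    moreover have "bl \<alpha> i \<le> bl \<alpha> k" "bl \<alpha> k \<le> bl \<alpha> (Suc k)" "bl \<alpha> (Suc k) \<le> bl \<alpha> j"
      using bl_mono[OF n, of i k] bl_mono[OF n, of k "Suc k"] bl_mono[OF n, of "Suc k" j] k ij by auto
    ultimately show False using ij by linarith
  qed
next
  assume I: "incr n (bl \<alpha>) w"
  show "Des n w \<subseteq> comp_Set \<alpha>"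
  proof
    fix i assume "i \<in> Des n w"
    then have i: "1 \<le> i" "i \<le> n - 1" "w (Suc i) < w i" unfolding Des_def by auto
    show "i \<in> comp_Set \<alpha>"
    proof (rule ccontr)
      assume "i \<notin> comp_Set \<alpha>"
      then have "bl \<alpha> i = bl \<alpha> (Suc i)" using set_iff_bl[OF n i(1,2)] by auto
      moreover have "Suc i \<le> n" using i by arith
      ultimately have "w i < w (Suc i)" using incrD[OF I, of i "Suc i"] i by auto
      then show False using i by auto
    qed
  qed
qed

lemma sum_insert_le:
  fixes f :: "nat \<Rightarrow> nat"
  assumes "finite B" "insert b A \<subseteq> B" "b \<notin> A"
  shows "sum f A + f b \<le> sum f B"
proof -
  have fA: "finite A" by (rule finite_subset[of A B]) (use assms in auto)
  have e: "sum f (insert b A) = f b + sum f A" by (rule sum.insert[OF fA assms(3)])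
  have "sum f (insert b A) \<le> sum f B" by (rule sum_mono2[OF assms(1) assms(2)]) simp
  then show ?thesis using e by simp
qed

lemma q_construct:
  fixes \<beta> \<gamma> :: "nat list" and c :: "nat \<Rightarrow> nat" and n :: nat
  assumes nb: "sum_list \<beta> = n" and ng: "sum_list \<gamma> = n"
    and cl: "\<And>b. b < length \<beta> \<Longrightarrow> c b < length \<gamma>"
    and cs: "\<And>c0. c0 < length \<gamma> \<Longrightarrow> \<gamma> ! c0 = (\<Sum>b\<in>{b. b < length \<beta> \<and> c b = c0}. \<beta> ! b)"
  shows "\<exists>q. q \<in> Sn n \<and>
    (\<forall>x y. 1 \<le> x \<longrightarrow> x \<le> n \<longrightarrow> 1 \<le> y \<longrightarrow> y \<le> n \<longrightarrow> bl \<beta> x = bl \<beta> y \<longrightarrow> bl \<gamma> (q x) = bl \<gamma> (q y)) \<and>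
    (\<forall>x y. 1 \<le> x \<longrightarrow> x < y \<longrightarrow> y \<le> n \<longrightarrow> bl \<beta> x = bl \<beta> y \<longrightarrow> q x < q y)"
proof -
  define P where "P b = (\<Sum>b'\<in>{b'. b' < b \<and> c b' = c b}. \<beta> ! b')" for b
  define qf where "qf x = (if 1 \<le> x \<and> x \<le> n then S \<gamma> (c (bl \<beta> x)) + P (bl \<beta> x) + (x - S \<beta> (bl \<beta> x)) else x)" for x
  have Pb: "P b + \<beta> ! b \<le> \<gamma> ! (c b)" if b: "b < length \<beta>" for b
  proof -
    have "P b + \<beta> ! b \<le> (\<Sum>b'\<in>{b'. b' < length \<beta> \<and> c b' = c b}. \<beta> ! b')"
      unfolding P_def by (rule sum_insert_le) (use b in auto)
    also have "\<dots> = \<gamma> ! (c b)" using cs[OF cl[OF b]] by simp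
    finally show ?thesis .
  qed
  have Pstep: "P b1 + \<beta> ! b1 \<le> P b2" if "b1 < b2" "c b1 = c b2" for b1 b2
    unfolding P_def by (rule sum_insert_le) (use that in auto)
  have xprops: "bl \<beta> x < length \<beta> \<and> S \<beta> (bl \<beta> x) < x \<and> x \<le> S \<beta> (bl \<beta> x) + \<beta> ! (bl \<beta> x)"
    if x: "1 \<le> x" "x \<le> n" for x
    using bl_props[OF nb x] S_Suc[of "bl \<beta> x" \<beta>] by auto
  have qprops: "bl \<gamma> (qf x) = c (bl \<beta> x) \<and> 1 \<le> qf x \<and> qf x \<le> n" if x: "1 \<le> x" "x \<le> n" for x
  proof -
    define b where "b = bl \<beta> x"
    have b: "b < length \<beta>" "S \<beta> b < x" "x \<le> S \<beta> b + \<beta> ! b" using xprops[OF x] unfolding b_def by auto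
    have cb: "c b < length \<gamma>" using cl[OF b(1)] .
    have qx: "qf x = S \<gamma> (c b) + P b + (x - S \<beta> b)" unfolding qf_def b_def using x by simp
    have lo: "S \<gamma> (c b) < qf x" using qx b by simp
    have "qf x \<le> S \<gamma> (c b) + \<gamma> ! (c b)" using qx b Pb[OF b(1)] by simp
    then have up: "qf x \<le> S \<gamma> (Suc (c b))" using S_Suc[OF cb] by simp
    have "S \<gamma> (Suc (c b)) \<le> S \<gamma> (length \<gamma>)" using cb by (intro S_mono) simp
    then have "S \<gamma> (Suc (c b)) \<le> n" using S_top[of \<gamma> "length \<gamma>"] ng by simp
    then show ?thesis using bl_eq[OF lo up] lo up unfolding b_def by simp
  qed
  have inj: "inj_on qf {1..n}"
  proof (rule inj_onI)
    fix x y assume x: "x \<in> {1..n}" and y: "y \<in> {1..n}" and e: "qf x = qf y"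
    define bx where "bx = bl \<beta> x"
    define bw where "bw = bl \<beta> y"
    have "bl \<gamma> (qf x) = c bx" using qprops[of x] x unfolding bx_def by simp
    moreover have "bl \<gamma> (qf y) = c bw" using qprops[of y] y unfolding bw_def by simp
    ultimately have cxy: "c bx = c bw" using e by simp
    have qx: "qf x = S \<gamma> (c bx) + P bx + (x - S \<beta> bx)" unfolding qf_def bx_def using x by simp
    have qy: "qf y = S \<gamma> (c bw) + P bw + (y - S \<beta> bw)" unfolding qf_def bw_def using y by simp
    have px: "S \<beta> bx < x" "x \<le> S \<beta> bx + \<beta> ! bx" using xprops[of x] x unfolding bx_def by auto
    have py: "S \<beta> bw < y" "y \<le> S \<beta> bw + \<beta> ! bw" using xprops[of y] y unfolding bw_def by auto
    define ox where "ox = x - S \<beta> bx"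
    define oy where "oy = y - S \<beta> bw"
    have o: "1 \<le> ox" "ox \<le> \<beta> ! bx" "1 \<le> oy" "oy \<le> \<beta> ! bw" "x = S \<beta> bx + ox" "y = S \<beta> bw + oy"
      using px py unfolding ox_def oy_def by auto
    have qx': "qf x = S \<gamma> (c bx) + P bx + ox" using qx ox_def by simp
    have qy': "qf y = S \<gamma> (c bw) + P bw + oy" using qy oy_def by simp
    have sc: "S \<gamma> (c bx) = S \<gamma> (c bw)" using cxy by simp
    have "bx = bw"
    proof (rule ccontr)
      assume "bx \<noteq> bw"
      then consider "bx < bw" | "bw < bx" by linarith
      then show False
      proof cases
        case 1
        then have "P bx + \<beta> ! bx \<le> P bw" using Pstep[of bx bw] cxy by simp
        then show False using qx' qy' o e cxy sc by linarith
      next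
        case 2
        then have "P bw + \<beta> ! bw \<le> P bx" using Pstep[of bw bx] cxy by simp
        then show False using qx' qy' o e cxy sc by linarith
      qed
    qed
    then show "x = y" using qx' qy' o e cxy by simp
  qed
  have img: "qf ` {1..n} \<subseteq> {1..n}"
  proof
    fix z assume "z \<in> qf ` {1..n}"
    then obtain x where "x \<in> {1..n}" "z = qf x" by blast
    then show "z \<in> {1..n}" using qprops[of x] by simp
  qed
  have "qf ` {1..n} = {1..n}" using endo_inj_surj[OF _ img inj] by simp
  then have "bij_betw qf {1..n} {1..n}" using inj unfolding bij_betw_def by simp
  then have "qf permutes {1..n}" by (rule bij_imp_permutes) (auto simp: qf_def)
  then have qS: "qf \<in> Sn n" unfolding Sn_def by simp
  have A: "\<forall>x y. 1 \<le> x \<longrightarrow> x \<le> n \<longrightarrow> 1 \<le> y \<longrightarrow> y \<le> n \<longrightarrow> bl \<beta> x = bl \<beta> y \<longrightarrow> bl \<gamma> (qf x) = bl \<gamma> (qf y)"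
  proof (intro allI impI)
    fix x y assume xy: "1 \<le> x" "x \<le> n" "1 \<le> y" "y \<le> n" "bl \<beta> x = bl \<beta> y"
    have "bl \<gamma> (qf x) = c (bl \<beta> x)" using qprops[of x] xy by blast
    moreover have "bl \<gamma> (qf y) = c (bl \<beta> y)" using qprops[of y] xy by blast
    ultimately show "bl \<gamma> (qf x) = bl \<gamma> (qf y)" using xy by simp
  qed
  have B: "\<forall>x y. 1 \<le> x \<longrightarrow> x < y \<longrightarrow> y \<le> n \<longrightarrow> bl \<beta> x = bl \<beta> y \<longrightarrow> qf x < qf y"
  proof (intro allI impI)
    fix x y assume xy: "1 \<le> x" "x < y" "y \<le> n" "bl \<beta> x = bl \<beta> y"
    have "qf x = S \<gamma> (c (bl \<beta> x)) + P (bl \<beta> x) + (x - S \<beta> (bl \<beta> x))" unfolding qf_def using xy by simp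
    moreover have "qf y = S \<gamma> (c (bl \<beta> y)) + P (bl \<beta> y) + (y - S \<beta> (bl \<beta> y))" unfolding qf_def using xy by simp
    moreover have "S \<beta> (bl \<beta> x) < x" using xprops[of x] xy by auto
    ultimately show "qf x < qf y" using xy by simp
  qed
  show ?thesis using qS A B by blast
qed

lemma und_perm:
  obtains \<tau> where "\<tau> permutes {..<length \<alpha>}" "length (und_part \<alpha>) = length \<alpha>"
    "\<And>i. i < length \<alpha> \<Longrightarrow> und_part \<alpha> ! i = \<alpha> ! \<tau> i"
proof -
  have "mset (und_part \<alpha>) = mset \<alpha>" unfolding und_part_def by simp
  then obtain \<tau> where t: "\<tau> permutes {..<length \<alpha>}" "permute_list \<tau> \<alpha> = und_part \<alpha>"
    by (rule mset_eq_permutation)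
  show ?thesis
  proof (rule that[OF t(1)])
    show "length (und_part \<alpha>) = length \<alpha>" using t(2)[symmetric] by simp
    show "und_part \<alpha> ! i = \<alpha> ! \<tau> i" if "i < length \<alpha>" for i
      using permute_list_nth[OF t(1) that] t(2) by simp
  qed
qed

lemma B_comp_eq:
  assumes "sum_list \<alpha> = n"
  shows "(B_comp n \<alpha> :: perm \<Rightarrow> 'k::comm_ring_1) = (\<lambda>w. if w \<in> Sn n \<and> incr n (bl \<alpha>) w then 1 else 0)"
  unfolding B_comp_def BI_def using Des_iff_incr[OF assms] by (auto intro!: ext)

theorem proposition2p6:
  fixes n :: nat and \<beta> \<gamma> :: "nat list"
  assumes "is_comp n \<beta>" and "is_comp n \<gamma>"
    and "part_le (und_part \<beta>) (und_part \<gamma>)"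
  shows "(R_comp n \<beta> :: (perm \<Rightarrow> 'k::comm_ring_1) set) \<subseteq> R_comp n \<gamma>"
proof -
  have nb: "sum_list \<beta> = n" and ng: "sum_list \<gamma> = n" using assms(1,2) unfolding is_comp_def by auto
  obtain f where f1: "\<And>i. i < length (und_part \<beta>) \<Longrightarrow> f i < length (und_part \<gamma>)"
    and f2: "\<And>j. j < length (und_part \<gamma>) \<Longrightarrow> und_part \<gamma> ! j =
        (\<Sum>i\<in>{i. i < length (und_part \<beta>) \<and> f i = j}. und_part \<beta> ! i)"
    using assms(3) unfolding part_le_def by blast
  obtain \<tau> where t1: "\<tau> permutes {..<length \<beta>}" and t2: "length (und_part \<beta>) = length \<beta>"
    and t3: "\<And>i. i < length \<beta> \<Longrightarrow> und_part \<beta> ! i = \<beta> ! \<tau> i" by (rule und_perm[of \<beta>]) blast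
  obtain \<rho> where r1: "\<rho> permutes {..<length \<gamma>}" and r2: "length (und_part \<gamma>) = length \<gamma>"
    and r3: "\<And>i. i < length \<gamma> \<Longrightarrow> und_part \<gamma> ! i = \<gamma> ! \<rho> i" by (rule und_perm[of \<gamma>]) blast
  define c where "c b = \<rho> (f (inv \<tau> b))" for b
  have it: "inv \<tau> b < length \<beta>" if "b < length \<beta>" for b
    using permutes_in_image[OF permutes_inv[OF t1]] that by auto
  have cl: "c b < length \<gamma>" if b: "b < length \<beta>" for b
  proof -
    have "f (inv \<tau> b) < length \<gamma>" using f1[of "inv \<tau> b"] it[OF b] t2 r2 by simp
    then show ?thesis unfolding c_def using permutes_in_image[OF r1] by auto
  qed
  have cs: "\<gamma> ! c0 = (\<Sum>b\<in>{b. b < length \<beta> \<and> c b = c0}. \<beta> ! b)" if c0: "c0 < length \<gamma>" for c0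
  proof -
    define j where "j = inv \<rho> c0"
    have j: "j < length \<gamma>" unfolding j_def using permutes_in_image[OF permutes_inv[OF r1]] c0 by auto
    have rj: "\<rho> j = c0" unfolding j_def using permutes_inverses(1)[OF r1] by simp
    have "\<gamma> ! c0 = und_part \<gamma> ! j" using r3[OF j] rj by simp
    also have "\<dots> = (\<Sum>i\<in>{i. i < length \<beta> \<and> f i = j}. und_part \<beta> ! i)" using f2[of j] j r2 t2 by simp
    also have "\<dots> = (\<Sum>i\<in>{i. i < length \<beta> \<and> f i = j}. \<beta> ! \<tau> i)" using t3 by simp
    also have "\<dots> = (\<Sum>b\<in>{b. b < length \<beta> \<and> c b = c0}. \<beta> ! b)"
    proof (rule sum.reindex_bij_witness[of _ "inv \<tau>" \<tau>])
      fix i assume i: "i \<in> {i. i < length \<beta> \<and> f i = j}"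
      show "inv \<tau> (\<tau> i) = i" using permutes_inverses(2)[OF t1] by simp
      have "\<tau> i < length \<beta>" using permutes_in_image[OF t1] i by auto
      moreover have "c (\<tau> i) = c0" unfolding c_def using permutes_inverses(2)[OF t1] i rj by simp
      ultimately show "\<tau> i \<in> {b. b < length \<beta> \<and> c b = c0}" by simp
      show "\<beta> ! \<tau> i = \<beta> ! \<tau> i" by simp
    next
      fix b assume b: "b \<in> {b. b < length \<beta> \<and> c b = c0}"
      show "\<tau> (inv \<tau> b) = b" using permutes_inverses(1)[OF t1] by simp
      have "\<rho> (f (inv \<tau> b)) = \<rho> j" using b rj unfolding c_def by simp
      then have "f (inv \<tau> b) = j" using permutes_inj[OF r1] by (auto dest: injD)
      then show "inv \<tau> b \<in> {i. i < length \<beta> \<and> f i = j}" using it b by auto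
    qed
    finally show ?thesis .
  qed
  obtain q where q: "q \<in> Sn n"
    and qA: "\<forall>x y. 1 \<le> x \<longrightarrow> x \<le> n \<longrightarrow> 1 \<le> y \<longrightarrow> y \<le> n \<longrightarrow> bl \<beta> x = bl \<beta> y \<longrightarrow> bl \<gamma> (q x) = bl \<gamma> (q y)"
    and qB: "\<forall>x y. 1 \<le> x \<longrightarrow> x < y \<longrightarrow> y \<le> n \<longrightarrow> bl \<beta> x = bl \<beta> y \<longrightarrow> q x < q y"
    using q_construct[OF nb ng cl cs] by blast
  define Z where "Z = {z \<in> Sn n. incr n (bl \<beta>) z \<and> (\<forall>x. 1 \<le> x \<longrightarrow> x \<le> n \<longrightarrow> bl \<gamma> (z x) = bl \<gamma> (q x))}"
  define a where "a = (\<lambda>z. if z \<in> Z then (1::'k) else 0)"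
  have key: "(B_comp n \<beta> :: perm \<Rightarrow> 'k) = alg_mult n (B_comp n \<gamma>) a"
    unfolding B_comp_eq[OF nb] B_comp_eq[OF ng] a_def Z_def
    by (rule main_abstract[OF mono_lab_bl[OF ng] q]) (use qA qB in blast)+
  show ?thesis
  proof
    fix r assume "r \<in> (R_comp n \<beta> :: (perm \<Rightarrow> 'k) set)"
    then obtain x where x: "x \<in> grp_alg n" and r: "r = alg_mult n (B_comp n \<beta>) x"
      unfolding R_comp_def by blast
    have "r = alg_mult n (B_comp n \<gamma>) (alg_mult n a x)" using r key alg_mult_assoc by metis
    then show "r \<in> R_comp n \<gamma>" unfolding R_comp_def using alg_mult_grp by blast
  qed
qed

end
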